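(* Let $B\in\mathbb{R}^{k\times k}$ have an SVD $B=U\,\mathrm{diag}(\sigma_1,\dots,\sigma_k)V'$ with $\sigma_1>\sigma_2>\dots>\sigma_k>0$, and let $\tilde B=B+\Delta_B$. Let $\alpha_B=\min_{i\neq j}|\sigma_i-\sigma_j|$. If there exists $\epsilon>0$ with $$\|\Delta_B\|_F<\epsilon\le\frac{\alpha_B^2}{\sqrt{2}\Big(2\|B\|_F\big(1+\sqrt{1-\tfrac1k}\big)+\sqrt{\alpha_B^2+4\|B\|_F^2\big(1+\sqrt{1-\tfrac1k}\big)^2}\Big)},$$ then $\tilde B$ has an SVD $\tilde B=\tilde U\,\mathrm{diag}(\tilde\sigma_1,\dots,\tilde\sigma_k)\tilde V'$ with $\tilde\sigma_1\ge\dots\ge\tilde\sigma_k$ such that $\|U-\tilde U\|_F\le 2\sqrt{2}\,\dfrac{\epsilon}{\alpha_B}$. *)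

theory Defs
  imports "HOL-Analysis.Analysis"
begin

definition fro_norm :: "real^'n^'m \<Rightarrow> real" where
  "fro_norm A = sqrt (\<Sum>i\<in>UNIV. \<Sum>j\<in>UNIV. (A $ i $ j)^2)"

definition diag_mat :: "('k::finite \<Rightarrow> real) \<Rightarrow> real^'k^'k" where
  "diag_mat s = (\<chi> i j. if i = j then s i else 0)"

definition is_svd :: "real^'k^'k \<Rightarrow> real^'k^'k \<Rightarrow> ('k::finite \<Rightarrow> real) \<Rightarrow> real^'k^'k \<Rightarrow> bool" where
  "is_svd A U s V \<longleftrightarrow> orthogonal_matrix U \<and> orthogonal_matrix V \<and> (\<forall>i. 0 \<le> s i)
     \<and> A = U ** diag_mat s ** transpose V"

definition sv_gap :: "('k::finite \<Rightarrow> real) \<Rightarrow> real" where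
  "sv_gap s = Min {\<bar>s i - s j\<bar> | i j. i \<noteq> j}"

definition strict_decr :: "('k::linorder \<Rightarrow> real) \<Rightarrow> bool" where
  "strict_decr s \<longleftrightarrow> (\<forall>i j. i < j \<longrightarrow> s j < s i)"

definition weak_decr :: "('k::linorder \<Rightarrow> real) \<Rightarrow> bool" where
  "weak_decr s \<longleftrightarrow> (\<forall>i j. i \<le> j \<longrightarrow> s j \<le> s i)"

end

theory Submission
  imports Defs
begin


lemma inner_adj: fixes A :: "real^'n^'m" shows "inner (A *v x) y = inner x (transpose A *v y)"
  by (metis dot_lmul_matrix inner_commute transpose_matrix_vector)

lemma col_inner_eq: "column i P \<bullet> x = (transpose P *v x) $ i"
  by (simp add: column_def inner_vec_def matrix_vector_mult_def transpose_def mult.commute)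

lemma orth_norm: fixes P :: "real^'n^'n" assumes "orthogonal_matrix P"
  shows "(P *v x) \<bullet> (P *v x) = x \<bullet> x"
  using assms by (simp add: inner_adj matrix_vector_mul_assoc orthogonal_matrix)

lemma parseval: fixes P :: "real^'n^'n" assumes "orthogonal_matrix P"
  shows "(\<Sum>i\<in>UNIV. (column i P \<bullet> x)^2) = x \<bullet> x"
proof -
  have "(\<Sum>i\<in>UNIV. (column i P \<bullet> x)^2) = (transpose P *v x) \<bullet> (transpose P *v x)"
    by (simp only: col_inner_eq) (simp add: inner_vec_def power2_eq_square)
  also have "\<dots> = x \<bullet> x" using assms by (intro orth_norm) simp
  finally show ?thesis .
qed

lemma parseval': fixes P :: "real^'n^'n" assumes "orthogonal_matrix P"
  shows "(\<Sum>i\<in>UNIV. (x \<bullet> column i P)^2) = x \<bullet> x"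
proof -
  have "\<And>i. x \<bullet> column i P = column i P \<bullet> x" by (rule inner_commute)
  then show ?thesis by (simp only: parseval[OF assms])
qed

lemma fro_sq: "(fro_norm A)^2 = (\<Sum>i\<in>UNIV. \<Sum>j\<in>UNIV. (A $ i $ j)^2)"
  unfolding fro_norm_def by (simp add: sum_nonneg)

lemma fro_nonneg: "fro_norm A \<ge> 0"
  unfolding fro_norm_def by (intro real_sqrt_ge_zero sum_nonneg) auto

lemma row_self: "A $ i \<bullet> A $ i = (\<Sum>j\<in>UNIV. (A $ i $ j)^2)"
  by (simp add: inner_vec_def power2_eq_square)

lemma fro_cols: fixes A Q :: "real^'n^'n" assumes "orthogonal_matrix Q"
  shows "(fro_norm A)^2 = (\<Sum>j\<in>UNIV. (A *v column j Q) \<bullet> (A *v column j Q))"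
proof -
  have "(\<Sum>j\<in>UNIV. (A *v column j Q) \<bullet> (A *v column j Q))
      = (\<Sum>j\<in>UNIV. \<Sum>i\<in>UNIV. (A $ i \<bullet> column j Q)^2)"
    by (simp add: matrix_mult_dot inner_vec_def power2_eq_square)
  also have "\<dots> = (\<Sum>i\<in>UNIV. \<Sum>j\<in>UNIV. (A $ i \<bullet> column j Q)^2)"
    by (rule sum.swap)
  also have "\<dots> = (\<Sum>i\<in>UNIV. A $ i \<bullet> A $ i)"
    by (simp only: parseval'[OF assms])
  also have "\<dots> = (fro_norm A)^2" by (simp add: fro_sq row_self)
  finally show ?thesis by simp
qed

lemma fro_mulv: fixes A :: "real^'n^'m"
  shows "(A *v x) \<bullet> (A *v x) \<le> (fro_norm A)^2 * (x \<bullet> x)"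
proof -
  have "(A *v x) \<bullet> (A *v x) = (\<Sum>i\<in>UNIV. (A $ i \<bullet> x)^2)"
    by (simp add: matrix_mult_dot inner_vec_def power2_eq_square)
  also have "\<dots> \<le> (\<Sum>i\<in>UNIV. (A $ i \<bullet> A $ i) * (x \<bullet> x))"
    by (intro sum_mono Cauchy_Schwarz_ineq)
  also have "\<dots> = (fro_norm A)^2 * (x \<bullet> x)"
    by (simp add: fro_sq row_self sum_distrib_right)
  finally show ?thesis .
qed

lemma fro_mulv_norm: fixes A :: "real^'n^'m"
  shows "norm (A *v x) \<le> fro_norm A * norm x"
proof -
  have "(norm (A *v x))^2 \<le> (fro_norm A * norm x)^2"
    using fro_mulv[of A x] by (simp add: power2_norm_eq_inner power_mult_distrib)
  then show ?thesis using fro_nonneg[of A] by (simp add: power2_le_iff_abs_le)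
qed

lemma fro_transpose: "fro_norm (transpose A) = fro_norm A"
proof -
  have "(\<Sum>i\<in>UNIV. \<Sum>j\<in>UNIV. (transpose A $ i $ j)^2) = (\<Sum>i\<in>UNIV. \<Sum>j\<in>UNIV. (A $ j $ i)^2)"
    by (simp add: transpose_def)
  also have "\<dots> = (\<Sum>j\<in>UNIV. \<Sum>i\<in>UNIV. (A $ j $ i)^2)" by (rule sum.swap)
  finally show ?thesis unfolding fro_norm_def by simp
qed

lemma fro_uminus: "fro_norm (- A) = fro_norm A"
  unfolding fro_norm_def by simp

lemma key_alg: fixes s \<sigma> g x y a b :: real
  assumes "0 \<le> s" "0 \<le> \<sigma>" "0 < g" "g \<le> \<bar>s - \<sigma>\<bar>"
    and "s*x - \<sigma>*y = a" "s*y - \<sigma>*x = b"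
  shows "g^2 * x^2 \<le> a^2 + b^2"
proof -
  have "(s - \<sigma>) * (x + y) = (s*x - \<sigma>*y) + (s*y - \<sigma>*x)" by (simp add: algebra_simps)
  then have e1: "(s - \<sigma>) * (x + y) = a + b" using assms(5,6) by simp
  have "(s + \<sigma>) * (x - y) = (s*x - \<sigma>*y) - (s*y - \<sigma>*x)" by (simp add: algebra_simps)
  then have e2: "(s + \<sigma>) * (x - y) = a - b" using assms(5,6) by simp
  have h1: "g * \<bar>x + y\<bar> \<le> \<bar>a + b\<bar>"
  proof -
    have "g * \<bar>x + y\<bar> \<le> \<bar>s - \<sigma>\<bar> * \<bar>x + y\<bar>" using assms by (simp add: mult_right_mono)
    also have "\<dots> = \<bar>a + b\<bar>" using e1 by (metis abs_mult)
    finally show ?thesis .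
  qed
  have h2: "g * \<bar>x - y\<bar> \<le> \<bar>a - b\<bar>"
  proof -
    have "g \<le> \<bar>s + \<sigma>\<bar>" using assms by linarith
    then have "g * \<bar>x - y\<bar> \<le> \<bar>s + \<sigma>\<bar> * \<bar>x - y\<bar>" by (simp add: mult_right_mono)
    also have "\<dots> = \<bar>a - b\<bar>" using e2 by (metis abs_mult)
    finally show ?thesis .
  qed
  have "2 * \<bar>x\<bar> \<le> \<bar>x + y\<bar> + \<bar>x - y\<bar>" by arith
  then have "g * (2 * \<bar>x\<bar>) \<le> g * (\<bar>x + y\<bar> + \<bar>x - y\<bar>)"
    using assms(3) by (intro mult_left_mono) auto
  then have h: "2 * g * \<bar>x\<bar> \<le> \<bar>a + b\<bar> + \<bar>a - b\<bar>"
    using h1 h2 by (simp add: algebra_simps)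
  have "(2 * g * \<bar>x\<bar>)^2 \<le> (\<bar>a + b\<bar> + \<bar>a - b\<bar>)^2"
    using h assms(3) by (intro power_mono) auto
  also have "\<dots> = 2 * (\<bar>a + b\<bar>^2 + \<bar>a - b\<bar>^2) - (\<bar>a + b\<bar> - \<bar>a - b\<bar>)^2"
    by (simp add: power2_eq_square algebra_simps)
  also have "\<dots> = 2 * ((a+b)^2 + (a-b)^2) - (\<bar>a + b\<bar> - \<bar>a - b\<bar>)^2"
    by (simp only: power2_abs)
  also have "\<dots> \<le> 2 * ((a+b)^2 + (a-b)^2)" by simp
  also have "\<dots> = 4 * (a^2 + b^2)" by (simp add: power2_eq_square algebra_simps)
  finally have "4 * (g^2 * x^2) \<le> 4 * (a^2 + b^2)"
    by (simp add: power_mult_distrib)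
  then show ?thesis by (rule mult_left_le_imp_le) simp
qed

lemma exists_unit_orth: fixes T :: "(real^'k) set"
  assumes "finite T" "card T < CARD('k)"
  shows "\<exists>x. x \<bullet> x = 1 \<and> (\<forall>y\<in>T. x \<bullet> y = 0)"
proof -
  have "dim T < DIM(real^'k)" using dim_le_card'[OF assms(1)] assms(2) by simp
  then obtain x where x: "x \<noteq> 0" "\<And>y. y \<in> span T \<Longrightarrow> orthogonal x y"
    using orthogonal_to_subspace_exists by blast
  define z where "z = x /\<^sub>R norm x"
  have "z \<bullet> z = 1" using x(1) by (simp add: z_def power2_norm_eq_inner[symmetric] field_simps power2_eq_square)
  moreover have "\<forall>y\<in>T. z \<bullet> y = 0"
    using x(2) by (auto simp: z_def orthogonal_def span_base)
  ultimately show ?thesis by blast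
qed

definition orthon :: "'i set \<Rightarrow> ('i \<Rightarrow> real^'k) \<Rightarrow> bool" where
  "orthon A q \<longleftrightarrow> (\<forall>i\<in>A. \<forall>j\<in>A. q i \<bullet> q j = (if i = j then 1 else 0))"

lemma completion: fixes q :: "'k::finite \<Rightarrow> real^'k"
  assumes "orthon A q"
  shows "\<exists>q'. (\<forall>i\<in>A. q' i = q i) \<and> orthon UNIV q'"
proof -
  have "\<And>B. finite B \<Longrightarrow> \<exists>q'. (\<forall>i\<in>A. q' i = q i) \<and> orthon (A \<union> B) q'"
  proof -
    fix B :: "'k set" assume "finite B"
    then show "\<exists>q'. (\<forall>i\<in>A. q' i = q i) \<and> orthon (A \<union> B) q'"
    proof (induction B rule: finite_induct)
      case empty then show ?case using assms by auto
    next
      case (insert c B)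
      then obtain q' where q': "\<forall>i\<in>A. q' i = q i" "orthon (A \<union> B) q'" by blast
      show ?case
      proof (cases "c \<in> A")
        case True
        then have "A \<union> insert c B = A \<union> B" by auto
        then show ?thesis using q' by auto
      next
        case False
        have "card (q' ` (A \<union> B)) \<le> card (A \<union> B)" by (rule card_image_le) simp
        also have "\<dots> < CARD('k)"
          using False insert(2) by (intro psubset_card_mono) auto
        finally obtain x where x: "x \<bullet> x = 1" "\<forall>y\<in>q' ` (A \<union> B). x \<bullet> y = 0"
          using exists_unit_orth[of "q' ` (A \<union> B)"] by auto
        define q'' where "q'' = q'(c := x)"
        have "\<forall>i\<in>A. q'' i = q i" using q'(1) False by (auto simp: q''_def)
        moreover have "orthon (A \<union> insert c B) q''"
          unfolding orthon_def
        proof (intro ballI)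
          fix i j assume ij: "i \<in> A \<union> insert c B" "j \<in> A \<union> insert c B"
          have cn: "c \<notin> A \<union> B" using False insert(2) by simp
          show "q'' i \<bullet> q'' j = (if i = j then 1 else 0)"
          proof (cases "i = c")
            case True
            then show ?thesis
            proof (cases "j = c")
              case True
              then show ?thesis using \<open>i = c\<close> x(1) by (simp add: q''_def)
            next
              case False
              then have "j \<in> A \<union> B" using ij by simp
              then show ?thesis using \<open>i = c\<close> False x(2) by (simp add: q''_def)
            qed
          next
            case False
            then have i: "i \<in> A \<union> B" using ij by simp
            show ?thesis
            proof (cases "j = c")
              case True
              then have "q'' i \<bullet> q'' j = x \<bullet> q' i" using False by (simp add: q''_def inner_commute)
              then show ?thesis using True False i x(2) by simp
            next
              case False
              then have "j \<in> A \<union> B" using ij by simp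
              then show ?thesis using \<open>i \<noteq> c\<close> False i q'(2) unfolding orthon_def q''_def by simp
            qed
          qed
        qed
        ultimately show ?thesis by blast
      qed
    qed
  qed
  from this[of UNIV] show ?thesis by simp
qed


declare transpose_matrix_vector [simp del]




lemma lagrange: fixes N :: "real^'k^'k"
  assumes max: "\<And>t::real. (N *v (p + t *\<^sub>R r)) \<bullet> (N *v (p + t *\<^sub>R r)) \<le> \<mu> * ((p + t *\<^sub>R r) \<bullet> (p + t *\<^sub>R r))"
    and pp: "p \<bullet> p = 1" and pr: "p \<bullet> r = 0" and mu: "\<mu> = (N *v p) \<bullet> (N *v p)"
    and pr2: "(N *v p) \<bullet> (N *v r) = r \<bullet> r"
  shows "r = 0"
proof -
  define R where "R = r \<bullet> r"
  define K where "K = (N *v r) \<bullet> (N *v r)"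
  have ineq: "2 * t * R + t^2 * K \<le> \<mu> * t^2 * R" for t
  proof -
    have "(N *v (p + t *\<^sub>R r)) \<bullet> (N *v (p + t *\<^sub>R r)) = \<mu> + 2 * t * R + t^2 * K"
      by (simp add: matrix_vector_right_distrib matrix_vector_mult_scaleR inner_add_left inner_add_right
          inner_commute mu pr2 R_def K_def power2_eq_square algebra_simps)
    moreover have "(p + t *\<^sub>R r) \<bullet> (p + t *\<^sub>R r) = 1 + t^2 * R"
      by (simp add: inner_add_left inner_add_right inner_commute pp pr R_def power2_eq_square)
    ultimately show ?thesis using max[of t] by (simp add: algebra_simps)
  qed
  have R0: "R \<ge> 0" by (simp add: R_def)
  define D where "D = \<bar>\<mu> * R\<bar> + \<bar>K\<bar> + 1"
  have D0: "D > 0" by (simp add: D_def)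
  define t where "t = R / D"
  have "2 * t * R \<le> t^2 * (\<mu> * R - K)" using ineq[of t] by (simp add: algebra_simps)
  also have "\<dots> \<le> t^2 * D"
    by (intro mult_left_mono) (auto simp: D_def)
  also have "\<dots> = t * R" using D0 by (simp add: t_def power2_eq_square)
  finally have "t * R \<le> 0" by (simp add: mult.commute)
  then have "R * R \<le> 0" using D0 by (simp add: t_def divide_le_0_iff)
  then have "R = 0" using R0 by (simp add: mult_le_0_iff) 
  then show ?thesis by (simp add: R_def)
qed

lemma mv_neg: "(N::real^'n^'m) *v (- x) = - (N *v x)"
  by (simp add: vec_eq_iff matrix_vector_mult_def sum_negf)

lemma greedy:
  fixes M :: "real^'k::{finite,linorder}^'k::{finite,linorder}" and u :: "'k::{finite,linorder} \<Rightarrow> real^'k::{finite,linorder}"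
  defines "f \<equiv> \<lambda>x. (transpose M *v x) \<bullet> (transpose M *v x)"
  shows "\<exists>p \<mu>. orthon UNIV p \<and> (\<forall>i. M *v (transpose M *v p i) = \<mu> i *\<^sub>R p i)
     \<and> (\<forall>i j. i \<le> j \<longrightarrow> \<mu> j \<le> \<mu> i) \<and> (\<forall>i. 0 \<le> u i \<bullet> p i) \<and> (\<forall>i. \<mu> i = f (p i))"
proof -
  let ?N = "transpose M"
  have main: "(\<forall>a\<in>A. \<forall>a'. a' < a \<longrightarrow> a' \<in> A) \<longrightarrow> (\<exists>p \<mu>. orthon A p
     \<and> (\<forall>a\<in>A. M *v (?N *v p a) = \<mu> a *\<^sub>R p a)
     \<and> (\<forall>a\<in>A. \<forall>c\<in>A. a \<le> c \<longrightarrow> \<mu> c \<le> \<mu> a)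
     \<and> (\<forall>a\<in>A. 0 \<le> u a \<bullet> p a) \<and> (\<forall>a\<in>A. \<mu> a = f (p a))
     \<and> (\<forall>a\<in>A. \<forall>x. (\<forall>a'. a' < a \<longrightarrow> x \<bullet> p a' = 0) \<longrightarrow> f x \<le> \<mu> a * (x \<bullet> x)))"
    if "finite A" for A
  using that
  proof (induction A rule: finite_linorder_max_induct)
    case empty
    show ?case by (auto simp: orthon_def)
  next
    case (insert b A)
    show ?case
    proof
      assume dc: "\<forall>a\<in>insert b A. \<forall>a'. a' < a \<longrightarrow> a' \<in> insert b A"
      have dcA: "\<forall>a\<in>A. \<forall>a'. a' < a \<longrightarrow> a' \<in> A"
      proof (intro ballI allI impI)
        fix a a' assume "a \<in> A" "a' < a"
        then have "a' \<in> insert b A" "a' < b" using dc insert.hyps(2) by auto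
        then show "a' \<in> A" by auto
      qed
      from mp[OF insert.IH dcA] obtain p \<mu> where H: "orthon A p
     \<and> (\<forall>a\<in>A. M *v (?N *v p a) = \<mu> a *\<^sub>R p a)
     \<and> (\<forall>a\<in>A. \<forall>c\<in>A. a \<le> c \<longrightarrow> \<mu> c \<le> \<mu> a)
     \<and> (\<forall>a\<in>A. 0 \<le> u a \<bullet> p a) \<and> (\<forall>a\<in>A. \<mu> a = f (p a))
     \<and> (\<forall>a\<in>A. \<forall>x. (\<forall>a'. a' < a \<longrightarrow> x \<bullet> p a' = 0) \<longrightarrow> f x \<le> \<mu> a * (x \<bullet> x))"
        by (elim exE) (rule that)
      note orth = H[THEN conjunct1]
      note eig = H[THEN conjunct2, THEN conjunct1]
      note ord = H[THEN conjunct2, THEN conjunct2, THEN conjunct1]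
      note sg = H[THEN conjunct2, THEN conjunct2, THEN conjunct2, THEN conjunct1]
      note muf = H[THEN conjunct2, THEN conjunct2, THEN conjunct2, THEN conjunct2, THEN conjunct1]
      note mx = H[THEN conjunct2, THEN conjunct2, THEN conjunct2, THEN conjunct2, THEN conjunct2]
      have bA: "b \<notin> A" using insert.hyps(2) by auto
      define C where "C = sphere 0 1 \<inter> (\<Inter>a\<in>A. {x. p a \<bullet> x = 0})"
      have compC: "compact C" unfolding C_def
        by (intro compact_Int_closed compact_sphere closed_INT ballI closed_hyperplane)
      have "card (p ` A) \<le> card A" by (rule card_image_le) (simp add: insert.hyps(1))
      also have "\<dots> < card (insert b A)" using bA insert.hyps(1) by simp
      also have "\<dots> \<le> CARD('k)" by (rule card_mono) auto
      finally obtain x1 where x1: "x1 \<bullet> x1 = 1" "\<forall>y\<in>p ` A. x1 \<bullet> y = 0"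
        using exists_unit_orth[of "p ` A"] insert.hyps(1) by auto
      have "x1 \<in> C" using x1 unfolding C_def by (auto simp: norm_eq_1 inner_commute)
      then have neC: "C \<noteq> {}" by auto
      have contf: "continuous_on C f" unfolding f_def by (intro continuous_intros)
      obtain x0 where x0: "x0 \<in> C" "\<forall>y\<in>C. f y \<le> f x0"
        using continuous_attains_sup[OF compC neC contf] by blast
      define pb where "pb = (if 0 \<le> u b \<bullet> x0 then x0 else - x0)"
      have pbC: "pb \<in> C" using x0(1) unfolding C_def pb_def by auto
      have fpb: "f pb = f x0" unfolding pb_def f_def by (simp add: mv_neg)
      have pbpb: "pb \<bullet> pb = 1" using pbC unfolding C_def by (simp add: norm_eq_1)
      have pbo: "\<forall>a\<in>A. pb \<bullet> p a = 0" using pbC unfolding C_def by (auto simp: inner_commute)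
      have f0: "f 0 = 0" unfolding f_def by simp
      have fscale: "f (c *\<^sub>R x) = c^2 * f x" for c x
        unfolding f_def by (simp add: matrix_vector_mult_scaleR power2_eq_square)
      have hmax: "\<forall>x. (\<forall>a\<in>A. x \<bullet> p a = 0) \<longrightarrow> f x \<le> f pb * (x \<bullet> x)"
      proof (intro allI impI)
        fix x assume xo: "\<forall>a\<in>A. x \<bullet> p a = 0"
        show "f x \<le> f pb * (x \<bullet> x)"
        proof (cases "x = 0")
          case True then show ?thesis using f0 by simp
        next
          case False
          define z where "z = (1 / norm x) *\<^sub>R x"
          have "z \<in> C" using False xo unfolding C_def z_def by (auto simp: inner_commute)
          then have "f z \<le> f pb" using x0(2) fpb by simp
          moreover have "f z = f x / (norm x)^2" unfolding z_def fscale by (simp add: power_divide)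
          ultimately have "f x / (norm x)^2 \<le> f pb" by simp
          then have "f x \<le> f pb * (norm x)^2" using False by (simp add: divide_le_eq)
          then show ?thesis by (simp add: power2_norm_eq_inner)
        qed
      qed
      define \<mu>b where "\<mu>b = f pb"
      define r where "r = M *v (?N *v pb) - \<mu>b *\<^sub>R pb"
      have adjM: "(M *v y) \<bullet> x = y \<bullet> (?N *v x)" for x y by (rule inner_adj)
      have adjN: "(?N *v y) \<bullet> x = y \<bullet> (M *v x)" for x y using inner_adj[of ?N y x] by simp
      have r_pa: "\<forall>a\<in>A. r \<bullet> p a = 0"
      proof
        fix a assume aA: "a \<in> A"
        have "(M *v (?N *v pb)) \<bullet> p a = (?N *v pb) \<bullet> (?N *v p a)" by (rule adjM)
        also have "\<dots> = pb \<bullet> (M *v (?N *v p a))" by (rule adjN)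
        also have "\<dots> = 0" using eig aA pbo by simp
        finally show "r \<bullet> p a = 0" using pbo aA by (simp add: r_def inner_diff_left)
      qed
      have r_pb: "r \<bullet> pb = 0"
      proof -
        have "(M *v (?N *v pb)) \<bullet> pb = f pb" unfolding f_def by (rule adjM)
        then show ?thesis by (simp add: r_def inner_diff_left pbpb \<mu>b_def)
      qed
      have "r = 0"
      proof (rule lagrange[where N = ?N and p = pb and \<mu> = \<mu>b])
        show "(?N *v (pb + t *\<^sub>R r)) \<bullet> (?N *v (pb + t *\<^sub>R r)) \<le> \<mu>b * ((pb + t *\<^sub>R r) \<bullet> (pb + t *\<^sub>R r))" for t
          using hmax[rule_format, of "pb + t *\<^sub>R r"] pbo r_pa unfolding f_def \<mu>b_def
          by (simp add: inner_add_left)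
        show "pb \<bullet> pb = 1" by (rule pbpb)
        show "pb \<bullet> r = 0" using r_pb by (simp add: inner_commute)
        show "\<mu>b = (?N *v pb) \<bullet> (?N *v pb)" unfolding \<mu>b_def f_def ..
        have "(?N *v pb) \<bullet> (?N *v r) = (?N *v r) \<bullet> (?N *v pb)" by (rule inner_commute)
        also have "\<dots> = r \<bullet> (M *v (?N *v pb))" by (rule adjN)
        also have "\<dots> = r \<bullet> (r + \<mu>b *\<^sub>R pb)" by (simp add: r_def)
        also have "\<dots> = r \<bullet> r" using r_pb by (simp add: inner_add_right inner_commute)
        finally show "(?N *v pb) \<bullet> (?N *v r) = r \<bullet> r" .
      qed
      then have eigb: "M *v (?N *v pb) = \<mu>b *\<^sub>R pb" by (simp add: r_def)
      define p' where "p' = p(b := pb)"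
      define \<mu>' where "\<mu>' = \<mu>(b := \<mu>b)"
      have Alt: "\<forall>a\<in>A. a < b" by (rule insert.hyps(2))
      have o1: "orthon (insert b A) p'" unfolding orthon_def
      proof (intro ballI)
        fix i j assume ij: "i \<in> insert b A" "j \<in> insert b A"
        show "p' i \<bullet> p' j = (if i = j then 1 else 0)"
        proof (cases "i = b")
          case True
          then show ?thesis
          proof (cases "j = b")
            case True then show ?thesis using \<open>i = b\<close> pbpb by (simp add: p'_def)
          next
            case False
            then have "j \<in> A" using ij by simp
            then show ?thesis using \<open>i = b\<close> False pbo by (simp add: p'_def)
          qed
        next
          case False
          then have i: "i \<in> A" using ij by simp
          show ?thesis
          proof (cases "j = b")
            case True
            then have "p' i \<bullet> p' j = pb \<bullet> p i" using False by (simp add: p'_def inner_commute)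
            then show ?thesis using True False i pbo by simp
          next
            case False
            then have "j \<in> A" using ij by simp
            then show ?thesis using \<open>i \<noteq> b\<close> False i orth unfolding orthon_def p'_def by simp
          qed
        qed
      qed
      have o2: "\<forall>a\<in>insert b A. M *v (?N *v p' a) = \<mu>' a *\<^sub>R p' a"
        using eig eigb bA by (auto simp: p'_def \<mu>'_def)
      have o3: "\<forall>a\<in>insert b A. \<forall>c\<in>insert b A. a \<le> c \<longrightarrow> \<mu>' c \<le> \<mu>' a"
      proof (intro ballI impI)
        fix a c assume a: "a \<in> insert b A" and c: "c \<in> insert b A" and ac: "a \<le> c"
        show "\<mu>' c \<le> \<mu>' a"
        proof (cases "c = b")
          case True
          show ?thesis
          proof (cases "a = b")
            case True then show ?thesis using \<open>c = b\<close> by simp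
          next
            case False
            then have aA: "a \<in> A" using a by simp
            have "\<forall>a'. a' < a \<longrightarrow> pb \<bullet> p a' = 0" using dcA aA pbo by blast
            then have "f pb \<le> \<mu> a * (pb \<bullet> pb)" using mx aA by blast
            then show ?thesis using True False pbpb by (simp add: \<mu>'_def \<mu>b_def)
          qed
        next
          case False
          then have cA: "c \<in> A" using c by simp
          then have "a \<noteq> b" using ac Alt by auto
          then have "a \<in> A" using a by simp
          then show ?thesis using ord cA ac \<open>a \<noteq> b\<close> False by (simp add: \<mu>'_def)
        qed
      qed
      have o4: "\<forall>a\<in>insert b A. 0 \<le> u a \<bullet> p' a"
        using sg bA by (auto simp: p'_def pb_def)
      have o5: "\<forall>a\<in>insert b A. \<mu>' a = f (p' a)"
        using muf bA by (auto simp: p'_def \<mu>'_def \<mu>b_def)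
      have o6: "\<forall>a\<in>insert b A. \<forall>x. (\<forall>a'. a' < a \<longrightarrow> x \<bullet> p' a' = 0) \<longrightarrow> f x \<le> \<mu>' a * (x \<bullet> x)"
      proof (intro ballI allI impI)
        fix a x assume a: "a \<in> insert b A" and xo: "\<forall>a'. a' < a \<longrightarrow> x \<bullet> p' a' = 0"
        show "f x \<le> \<mu>' a * (x \<bullet> x)"
        proof (cases "a = b")
          case True
          have "\<forall>a\<in>A. x \<bullet> p a = 0"
          proof
            fix a' assume "a' \<in> A"
            then have "a' < b" "a' \<noteq> b" using Alt by auto
            then show "x \<bullet> p a' = 0" using xo[rule_format, of a'] True by (simp add: p'_def)
          qed
          then show ?thesis using hmax True by (simp add: \<mu>'_def \<mu>b_def)
        next
          case False
          then have aA: "a \<in> A" using a by simp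
          have "\<forall>a'. a' < a \<longrightarrow> x \<bullet> p a' = 0"
          proof (intro allI impI)
            fix a' assume "a' < a"
            then have "a' \<noteq> b" using Alt aA by auto
            then show "x \<bullet> p a' = 0" using xo[rule_format, of a'] \<open>a' < a\<close> by (simp add: p'_def)
          qed
          then show ?thesis using mx aA False by (simp add: \<mu>'_def)
        qed
      qed
      show "\<exists>p \<mu>. orthon (insert b A) p
     \<and> (\<forall>a\<in>insert b A. M *v (?N *v p a) = \<mu> a *\<^sub>R p a)
     \<and> (\<forall>a\<in>insert b A. \<forall>c\<in>insert b A. a \<le> c \<longrightarrow> \<mu> c \<le> \<mu> a)
     \<and> (\<forall>a\<in>insert b A. 0 \<le> u a \<bullet> p a) \<and> (\<forall>a\<in>insert b A. \<mu> a = f (p a))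
     \<and> (\<forall>a\<in>insert b A. \<forall>x. (\<forall>a'. a' < a \<longrightarrow> x \<bullet> p a' = 0) \<longrightarrow> f x \<le> \<mu> a * (x \<bullet> x))"
        using o1 o2 o3 o4 o5 o6 by blast
    qed
  qed
  from main[of UNIV] show ?thesis by auto
qed





lemma col_ext: "(\<And>j. column j A = column j B) \<Longrightarrow> A = (B::'a^'n^'m)"
  by (simp add: vec_eq_iff column_def)

lemma column_mult: "column j (A ** B) = A *v column j (B::real^'n^'m)"
  by (simp add: vec_eq_iff column_def matrix_matrix_mult_def matrix_vector_mult_def)

lemma column_diag: "column j (P ** diag_mat s) = s j *\<^sub>R column j P"
proof -
  have "(\<Sum>k\<in>UNIV. P $ i $ k * (if k = j then s k else 0)) = P $ i $ j * s j" for i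
    by (simp add: if_distrib[where f="\<lambda>x. P $ i $ _ * x"] cong: if_cong)
  then show ?thesis
    by (simp add: vec_eq_iff column_def matrix_matrix_mult_def diag_mat_def mult.commute)
qed

lemma transpose_diag: "transpose (diag_mat s) = diag_mat s"
  by (simp add: vec_eq_iff transpose_def diag_mat_def)

lemma col_matrix: "column c ((\<chi> r c. p c $ r)::real^'n^'n) = p c"
  by (simp add: column_def vec_eq_iff)

lemma orth_of_orthon: fixes p :: "'n::finite \<Rightarrow> real^'n"
  assumes "orthon UNIV p" shows "orthogonal_matrix ((\<chi> r c. p c $ r)::real^'n^'n)"
  unfolding orthogonal_matrix_orthonormal_columns col_matrix
  using assms by (auto simp: orthon_def norm_eq_1 orthogonal_def)

lemma orthon_of_orth: fixes P :: "real^'n^'n"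
  assumes "orthogonal_matrix P" shows "column i P \<bullet> column j P = (if i = j then 1 else 0)"
  using assms unfolding orthogonal_matrix_orthonormal_columns
  by (auto simp: norm_eq_1 orthogonal_def)

lemma basis_zero: fixes P :: "real^'n^'n"
  assumes "orthogonal_matrix P" "\<And>j. v \<bullet> column j P = 0" shows "v = 0"
proof -
  have "v \<bullet> v = 0" using parseval'[OF assms(1), of v] assms(2) by simp
  then show ?thesis by simp
qed

lemma svd_rel: fixes A U V :: "real^'n^'n"
  assumes "is_svd A U s V"
  shows "A *v column i V = s i *\<^sub>R column i U" "transpose A *v column i U = s i *\<^sub>R column i V"
proof -
  have oU: "orthogonal_matrix U" and oV: "orthogonal_matrix V" and A: "A = U ** diag_mat s ** transpose V"
    using assms by (auto simp: is_svd_def)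
  have "A ** V = U ** diag_mat s ** (transpose V ** V)" by (simp add: A matrix_mul_assoc)
  also have "\<dots> = U ** diag_mat s" using oV by (simp add: orthogonal_matrix)
  finally have "column i (A ** V) = s i *\<^sub>R column i U" by (simp add: column_diag)
  then show "A *v column i V = s i *\<^sub>R column i U" by (simp add: column_mult)
  have "transpose A = V ** diag_mat s ** transpose U"
    by (simp add: A matrix_transpose_mul transpose_diag matrix_mul_assoc)
  then have "transpose A ** U = V ** diag_mat s ** (transpose U ** U)" by (simp add: matrix_mul_assoc)
  also have "\<dots> = V ** diag_mat s" using oU by (simp add: orthogonal_matrix)
  finally have "column i (transpose A ** U) = s i *\<^sub>R column i V" by (simp add: column_diag)
  then show "transpose A *v column i U = s i *\<^sub>R column i V" by (simp add: column_mult)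
qed

lemma svd_of_rel: fixes M P Q :: "real^'n^'n"
  assumes "orthogonal_matrix P" "orthogonal_matrix Q" "\<forall>i. 0 \<le> s i"
    "\<And>i. M *v column i Q = s i *\<^sub>R column i P"
  shows "is_svd M P s Q"
proof -
  have "M ** Q = P ** diag_mat s"
  proof (rule col_ext)
    fix j show "column j (M ** Q) = column j (P ** diag_mat s)"
      unfolding column_diag unfolding column_mult by (rule assms(4))
  qed
  then have "M ** Q ** transpose Q = P ** diag_mat s ** transpose Q" by simp
  moreover have "M ** Q ** transpose Q = M" using assms(2)
    by (simp add: matrix_mul_assoc[symmetric] orthogonal_matrix_def)
  ultimately show ?thesis using assms unfolding is_svd_def by simp
qed

lemma svd_build:
  fixes M :: "real^'k::{finite,linorder}^'k::{finite,linorder}" and u :: "'k::{finite,linorder} \<Rightarrow> real^'k::{finite,linorder}"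
  shows "\<exists>P Q s. orthogonal_matrix P \<and> orthogonal_matrix Q \<and> (\<forall>i. 0 \<le> s i)
    \<and> (\<forall>i j. i \<le> j \<longrightarrow> s j \<le> s i) \<and> (\<forall>i. 0 \<le> u i \<bullet> column i P)
    \<and> (\<forall>i. M *v column i Q = s i *\<^sub>R column i P)
    \<and> (\<forall>i. transpose M *v column i P = s i *\<^sub>R column i Q)"
proof -
  let ?N = "transpose M"
  obtain p \<mu> where orth: "orthon UNIV p" and eig: "\<forall>i. M *v (?N *v p i) = \<mu> i *\<^sub>R p i"
    and ord: "\<forall>i j. i \<le> j \<longrightarrow> \<mu> j \<le> \<mu> i" and sg: "\<forall>i. 0 \<le> u i \<bullet> p i"
    and muf: "\<forall>i. \<mu> i = (?N *v p i) \<bullet> (?N *v p i)"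
    using greedy[of M u] by blast
  define s where "s i = sqrt (\<mu> i)" for i
  have mu0: "0 \<le> \<mu> i" for i using muf[rule_format, of i] inner_ge_zero by metis
  have s0: "0 \<le> s i" for i using mu0[of i] by (simp add: s_def)
  have ss: "s i * s i = \<mu> i" for i using mu0 by (simp add: s_def)
  have sord: "i \<le> j \<Longrightarrow> s j \<le> s i" for i j using ord by (simp add: s_def real_sqrt_le_mono)
  have adjM: "(M *v y) \<bullet> x = y \<bullet> (?N *v x)" for x y by (rule inner_adj)
  have adjN: "(?N *v y) \<bullet> x = y \<bullet> (M *v x)" for x y using inner_adj[of ?N y x] by simp
  have pp: "p i \<bullet> p j = (if i = j then 1 else 0)" for i j using orth by (simp add: orthon_def)
  have NN: "(?N *v p i) \<bullet> (?N *v p j) = (if i = j then \<mu> i else 0)" for i j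
  proof -
    have "(?N *v p i) \<bullet> (?N *v p j) = p i \<bullet> (M *v (?N *v p j))" by (rule adjN)
    also have "\<dots> = \<mu> j * (p i \<bullet> p j)" using eig by simp
    finally show ?thesis using pp by simp
  qed
  define A where "A = {i. 0 < \<mu> i}"
  define q0 where "q0 i = (1 / s i) *\<^sub>R (?N *v p i)" for i
  have "orthon A q0" unfolding orthon_def
  proof (intro ballI)
    fix i j assume "i \<in> A" "j \<in> A"
    then have "0 < s i" "0 < s j" "0 < \<mu> i" "0 < \<mu> j" by (auto simp: A_def s_def)
    then show "q0 i \<bullet> q0 j = (if i = j then 1 else 0)"
      using NN[of i j] ss[of i] ss[of j] by (simp add: q0_def)
  qed
  then obtain q where qA: "\<forall>i\<in>A. q i = q0 i" and qo: "orthon UNIV q"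
    using completion by blast
  define P where "P = ((\<chi> r c. p c $ r)::real^'k::{finite,linorder}^'k::{finite,linorder})"
  define Q where "Q = ((\<chi> r c. q c $ r)::real^'k::{finite,linorder}^'k::{finite,linorder})"
  have cP: "column i P = p i" for i by (simp add: P_def col_matrix)
  have cQ: "column i Q = q i" for i by (simp add: Q_def col_matrix)
  have oP: "orthogonal_matrix P" unfolding P_def by (rule orth_of_orthon[OF orth])
  have oQ: "orthogonal_matrix Q" unfolding Q_def by (rule orth_of_orthon[OF qo])
  have qq: "q i \<bullet> q j = (if i = j then 1 else 0)" for i j using qo by (simp add: orthon_def)
  have rel1: "?N *v p i = s i *\<^sub>R q i" for i
  proof (cases "i \<in> A")
    case True
    then have "0 < s i" by (auto simp: A_def s_def)
    then show ?thesis using qA True by (simp add: q0_def)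
  next
    case False
    then have "\<mu> i = 0" using mu0[of i] by (simp add: A_def)
    then have "(?N *v p i) \<bullet> (?N *v p i) = 0" using muf by simp
    moreover have "s i = 0" using \<open>\<mu> i = 0\<close> by (simp add: s_def)
    ultimately show ?thesis by simp
  qed
  have rel2: "M *v q i = s i *\<^sub>R p i" for i
  proof -
    have "(M *v q i - s i *\<^sub>R p i) = 0"
    proof (rule basis_zero[OF oP])
      fix j
      have "(M *v q i) \<bullet> p j = q i \<bullet> (?N *v p j)" by (rule adjM)
      also have "\<dots> = s j * (q i \<bullet> q j)" by (simp add: rel1)
      finally show "(M *v q i - s i *\<^sub>R p i) \<bullet> column j P = 0"
        by (simp add: cP inner_diff_left qq pp)
    qed
    then show ?thesis by simp
  qed
  show ?thesis
    apply (rule exI[of _ P], rule exI[of _ Q], rule exI[of _ s])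
    using oP oQ s0 sord sg rel1 rel2 by (simp add: cP cQ)
qed





lemma transpose_add_mv: "transpose (A + E) *v x = transpose A *v x + transpose E *v (x::real^'m)"
  for A E :: "real^'n^'m"
  by (simp add: vec_eq_iff transpose_def matrix_vector_mult_def sum.distrib algebra_simps)

lemma norm_formula: fixes N P Q :: "real^'k^'k"
  assumes oP: "orthogonal_matrix P" and oQ: "orthogonal_matrix Q"
    and r: "\<And>i. N *v column i Q = s i *\<^sub>R column i P"
  shows "(transpose N *v x) \<bullet> (transpose N *v x) = (\<Sum>i\<in>UNIV. (s i)^2 * (x \<bullet> column i P)^2)"
proof -
  have "(transpose N *v x) \<bullet> (transpose N *v x) = (\<Sum>i\<in>UNIV. ((transpose N *v x) \<bullet> column i Q)^2)"
    using parseval'[OF oQ] by simp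
  also have "\<dots> = (\<Sum>i\<in>UNIV. (s i)^2 * (x \<bullet> column i P)^2)"
  proof (rule sum.cong)
    fix i
    have "(transpose N *v x) \<bullet> column i Q = x \<bullet> (N *v column i Q)"
      using inner_adj[of "transpose N" x "column i Q"] by simp
    also have "\<dots> = s i * (x \<bullet> column i P)" by (simp add: r)
    finally show "((transpose N *v x) \<bullet> column i Q)^2 = (s i)^2 * (x \<bullet> column i P)^2"
      by (simp add: power_mult_distrib)
  qed simp
  finally show ?thesis .
qed

lemma weyl_half:
  fixes N1 N2 E P1 Q1 P2 Q2 :: "real^'k::{finite,linorder}^'k::{finite,linorder}"
  assumes oP1: "orthogonal_matrix P1" and oQ1: "orthogonal_matrix Q1"
    and oP2: "orthogonal_matrix P2" and oQ2: "orthogonal_matrix Q2"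
    and r1: "\<And>i. N1 *v column i Q1 = s1 i *\<^sub>R column i P1"
    and r2: "\<And>i. N2 *v column i Q2 = s2 i *\<^sub>R column i P2"
    and s1: "\<And>i. 0 \<le> s1 i" and s2: "\<And>i. 0 \<le> s2 i"
    and d1: "\<And>i j. i \<le> j \<Longrightarrow> s1 j \<le> s1 i" and d2: "\<And>i j. i \<le> j \<Longrightarrow> s2 j \<le> s2 i"
    and N2: "N2 = N1 + E"
  shows "s2 j \<le> s1 j + fro_norm E"
proof -
  define T where "T = (\<lambda>i. column i P2) ` {i. j < i} \<union> (\<lambda>i. column i P1) ` {i. i < j}"
  have "card T \<le> card {i. j < i} + card {i. i < j}"
    unfolding T_def by (rule order.trans[OF card_Un_le add_mono]) (auto intro: card_image_le)
  also have "\<dots> = card ({i. j < i} \<union> {i. i < j})" by (rule card_Un_disjoint[symmetric]) auto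
  also have "\<dots> < CARD('k)"
  proof -
    have "{i. j < i} \<union> {i. i < j} \<subset> UNIV" by auto
    then show ?thesis by (intro psubset_card_mono) simp_all
  qed
  finally obtain x where x1: "x \<bullet> x = 1" and xo: "\<forall>y\<in>T. x \<bullet> y = 0"
    using exists_unit_orth[of T] unfolding T_def by auto
  have xo2: "x \<bullet> column i P2 = 0" if "j < i" for i using xo that unfolding T_def by auto
  have xo1: "x \<bullet> column i P1 = 0" if "i < j" for i using xo that unfolding T_def by auto
  have lo: "(s2 j)^2 \<le> (transpose N2 *v x) \<bullet> (transpose N2 *v x)"
  proof -
    have "(\<Sum>i\<in>UNIV. (s2 j)^2 * (x \<bullet> column i P2)^2) = (s2 j)^2 * (\<Sum>i\<in>UNIV. (x \<bullet> column i P2)^2)"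
      by (rule sum_distrib_left[symmetric])
    then have "(s2 j)^2 = (\<Sum>i\<in>UNIV. (s2 j)^2 * (x \<bullet> column i P2)^2)"
      using parseval'[OF oP2, of x] x1 by simp
    also have "\<dots> \<le> (\<Sum>i\<in>UNIV. (s2 i)^2 * (x \<bullet> column i P2)^2)"
    proof (rule sum_mono)
      fix i
      show "(s2 j)^2 * (x \<bullet> column i P2)^2 \<le> (s2 i)^2 * (x \<bullet> column i P2)^2"
      proof (cases "i \<le> j")
        case True
        then have "(s2 j)^2 \<le> (s2 i)^2" using d2[OF True] s2[of j] by (intro power_mono) auto
        then show ?thesis by (intro mult_right_mono) auto
      next
        case False then show ?thesis using xo2[of i] by simp
      qed
    qed
    also have "\<dots> = (transpose N2 *v x) \<bullet> (transpose N2 *v x)"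
      using norm_formula[OF oP2 oQ2 r2] by simp
    finally show ?thesis .
  qed
  have up: "(transpose N1 *v x) \<bullet> (transpose N1 *v x) \<le> (s1 j)^2"
  proof -
    have "(transpose N1 *v x) \<bullet> (transpose N1 *v x) = (\<Sum>i\<in>UNIV. (s1 i)^2 * (x \<bullet> column i P1)^2)"
      using norm_formula[OF oP1 oQ1 r1] by simp
    also have "\<dots> \<le> (\<Sum>i\<in>UNIV. (s1 j)^2 * (x \<bullet> column i P1)^2)"
    proof (rule sum_mono)
      fix i
      show "(s1 i)^2 * (x \<bullet> column i P1)^2 \<le> (s1 j)^2 * (x \<bullet> column i P1)^2"
      proof (cases "j \<le> i")
        case True
        then have "(s1 i)^2 \<le> (s1 j)^2" using d1[OF True] s1[of i] by (intro power_mono) auto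
        then show ?thesis by (intro mult_right_mono) auto
      next
        case False then show ?thesis using xo1[of i] by simp
      qed
    qed
    also have "\<dots> = (s1 j)^2 * (\<Sum>i\<in>UNIV. (x \<bullet> column i P1)^2)"
      by (rule sum_distrib_left[symmetric])
    also have "\<dots> = (s1 j)^2"
      using parseval'[OF oP1, of x] x1 by simp
    finally show ?thesis .
  qed
  have "(s2 j)^2 \<le> (norm (transpose N2 *v x))^2" using lo by (simp only: power2_norm_eq_inner)
  then have a1: "s2 j \<le> norm (transpose N2 *v x)" by (rule power2_le_imp_le) simp
  have a2: "norm (transpose N2 *v x) \<le> norm (transpose N1 *v x) + norm (transpose E *v x)"
    unfolding N2 transpose_add_mv by (rule norm_triangle_ineq)
  have "(norm (transpose N1 *v x))^2 \<le> (s1 j)^2" using up by (simp only: power2_norm_eq_inner)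
  then have a3: "norm (transpose N1 *v x) \<le> s1 j" by (rule power2_le_imp_le) (rule s1)
  have a4: "norm (transpose E *v x) \<le> fro_norm E"
  proof -
    have "norm (transpose E *v x) \<le> fro_norm (transpose E) * norm x" by (rule fro_mulv_norm)
    moreover have "norm x = 1" using x1 by (simp add: norm_eq_1)
    ultimately show ?thesis by (simp add: fro_transpose)
  qed
  show ?thesis using a1 a2 a3 a4 by linarith
qed





lemma fro_cols_direct: "(fro_norm A)^2 = (\<Sum>j\<in>UNIV. column j A \<bullet> column j (A::real^'n^'m))"
proof -
  have "(fro_norm A)^2 = (\<Sum>i\<in>UNIV. \<Sum>j\<in>UNIV. (A $ i $ j)^2)" by (rule fro_sq)
  also have "\<dots> = (\<Sum>j\<in>UNIV. \<Sum>i\<in>UNIV. (A $ i $ j)^2)" by (rule sum.swap)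
  also have "\<dots> = (\<Sum>j\<in>UNIV. column j A \<bullet> column j A)"
    by (simp add: inner_vec_def column_def power2_eq_square)
  finally show ?thesis .
qed

lemma column_diff: "column j (A - B) = column j A - column j (B::real^'n^'m)"
  by (simp add: vec_eq_iff column_def)

theorem corollaryC1:
  fixes \<sigma> :: "'k::{finite,linorder} \<Rightarrow> real"
    and B \<Delta> U V :: "real^'k::{finite,linorder}^'k::{finite,linorder}" and \<epsilon> :: real
  assumes "CARD('k::{finite,linorder}) \<ge> 2"
    and "is_svd B U \<sigma> V"
    and "strict_decr \<sigma>"
    and "\<forall>i. 0 < \<sigma> i"
    and "0 < \<epsilon>"
    and "fro_norm \<Delta> < \<epsilon>"
    and "\<epsilon> \<le> (sv_gap \<sigma>)^2 /
           (sqrt 2 * (2 * fro_norm B * (1 + sqrt (1 - 1 / real CARD('k::{finite,linorder})))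
             + sqrt ((sv_gap \<sigma>)^2 + 4 * (fro_norm B)^2 * (1 + sqrt (1 - 1 / real CARD('k::{finite,linorder})))^2)))"
  shows "\<exists>U' V' \<sigma>'. is_svd (B + \<Delta>) U' \<sigma>' V'
           \<and> weak_decr \<sigma>'
           \<and> fro_norm (U - U') \<le> 2 * sqrt 2 * \<epsilon> / sv_gap \<sigma>"
proof -
  note card2 = assms(1) and svdB = assms(2) and sd = assms(3) and spos = assms(4)
    and eps0 = assms(5) and dlt = assms(6) and epsb = assms(7)
  define \<alpha> where "\<alpha> = sv_gap \<sigma>"
  define b where "b = fro_norm B"
  define c where "c = sqrt (1 - 1 / real CARD('k))"
  define dD where "dD = fro_norm \<Delta>"
  have oU: "orthogonal_matrix U" and oV: "orthogonal_matrix V" using svdB by (auto simp: is_svd_def)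
  have Bv: "B *v column i V = \<sigma> i *\<^sub>R column i U" for i using svd_rel(1)[OF svdB] .
  have Bu: "transpose B *v column i U = \<sigma> i *\<^sub>R column i V" for i using svd_rel(2)[OF svdB] .
  obtain P Q s where oP: "orthogonal_matrix P" and oQ: "orthogonal_matrix Q" and s0: "\<forall>i. 0 \<le> s i"
    and sdec: "\<forall>i j. i \<le> j \<longrightarrow> s j \<le> s i" and sg: "\<forall>i. 0 \<le> column i U \<bullet> column i P"
    and Mq: "\<forall>i. (B + \<Delta>) *v column i Q = s i *\<^sub>R column i P"
    and Mp: "\<forall>i. transpose (B + \<Delta>) *v column i P = s i *\<^sub>R column i Q"
    using svd_build[where M = "B + \<Delta>" and u = "\<lambda>i. column i U"] by blast
  have svdM: "is_svd (B + \<Delta>) P s Q" using oP oQ s0 Mq by (intro svd_of_rel) auto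
  have wd: "weak_decr s" using sdec by (simp add: weak_decr_def)
  have \<sigma>dec: "i \<le> j \<Longrightarrow> \<sigma> j \<le> \<sigma> i" for i j
    using sd unfolding strict_decr_def by (cases "i = j") (auto simp: order.order_iff_strict)
  define G where "G = {\<bar>\<sigma> i - \<sigma> j\<bar> | i j. i \<noteq> j}"
  have finG: "finite G"
  proof -
    have "G \<subseteq> (\<lambda>(i, j). \<bar>\<sigma> i - \<sigma> j\<bar>) ` UNIV" unfolding G_def by auto
    then show ?thesis by (rule finite_subset) simp
  qed
  obtain i0 j0 :: 'k where ij0: "i0 \<noteq> j0"
  proof -
    have "\<not> card (UNIV::'k set) \<le> Suc 0" using card2 by simp
    then show ?thesis using that card_le_Suc0_iff_eq[of "UNIV::'k set"] by auto
  qed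
  have neG: "G \<noteq> {}" using ij0 unfolding G_def by auto
  have gap_le: "i \<noteq> j \<Longrightarrow> \<alpha> \<le> \<bar>\<sigma> i - \<sigma> j\<bar>" for i j
    unfolding \<alpha>_def sv_gap_def using finG by (intro Min_le) (auto simp: G_def)
  have "sv_gap \<sigma> = Min G" by (simp add: sv_gap_def G_def)
  then have "\<alpha> \<in> G" using Min_in[OF finG neG] by (simp add: \<alpha>_def)
  then obtain i1 j1 where "i1 \<noteq> j1" "\<alpha> = \<bar>\<sigma> i1 - \<sigma> j1\<bar>" unfolding G_def by auto
  moreover have "\<sigma> i1 \<noteq> \<sigma> j1"
  proof
    assume "\<sigma> i1 = \<sigma> j1"
    with \<open>i1 \<noteq> j1\<close> sd show False unfolding strict_decr_def
      by (metis linorder_neq_iff less_irrefl)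
  qed
  ultimately have apos: "0 < \<alpha>" by simp
  have uu: "column i U \<bullet> column i U = 1" for i using orthon_of_orth[OF oU, of i i] by simp
  have b2: "b^2 = (\<Sum>j\<in>UNIV. (\<sigma> j)^2)"
  proof -
    have "b^2 = (\<Sum>j\<in>UNIV. (B *v column j V) \<bullet> (B *v column j V))"
      unfolding b_def by (rule fro_cols[OF oV])
    also have "\<dots> = (\<Sum>j\<in>UNIV. (\<sigma> j)^2)" by (simp add: Bv uu power2_eq_square)
    finally show ?thesis .
  qed
  have sig_le_b: "\<sigma> i \<le> b" for i
  proof -
    have "(\<sigma> i)^2 \<le> (\<Sum>j\<in>UNIV. (\<sigma> j)^2)" by (rule member_le_sum) auto
    then have "(\<sigma> i)^2 \<le> b^2" using b2 by simp
    then show ?thesis by (rule power2_le_imp_le) (simp add: b_def fro_nonneg)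
  qed
  have ab: "\<alpha> \<le> b"
  proof -
    have "\<alpha> \<le> \<bar>\<sigma> i0 - \<sigma> j0\<bar>" using gap_le ij0 by simp
    moreover have "\<bar>\<sigma> i0 - \<sigma> j0\<bar> \<le> b" using sig_le_b[of i0] sig_le_b[of j0] spos[rule_format, of i0] spos[rule_format, of j0] by (auto simp: abs_if)
    ultimately show ?thesis by simp
  qed
  have c0: "0 \<le> c"
  proof -
    have "real CARD('k) \<ge> 2" using card2 by simp
    then have "1 / real CARD('k) \<le> 1" by simp
    then show ?thesis unfolding c_def by simp
  qed
  define X where "X = 2 * b * (1 + c)"
  have b0: "0 \<le> b" by (simp add: b_def fro_nonneg)
  have "0 \<le> 2 * b * c" using b0 c0 by simp
  moreover have "X = 2 * b + 2 * b * c" by (simp add: X_def algebra_simps)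
  ultimately have X2: "2 * \<alpha> \<le> X" using ab by linarith
  have Y: "X \<le> sqrt (\<alpha>^2 + 4 * b^2 * (1 + c)^2)"
    by (rule real_le_rsqrt) (simp add: X_def power_mult_distrib)
  have s2: "1 \<le> sqrt (2::real)" by simp
  define D where "D = sqrt 2 * (2 * b * (1 + c) + sqrt (\<alpha>^2 + 4 * b^2 * (1 + c)^2))"
  have D4: "4 * \<alpha> \<le> D"
  proof -
    have "4 * \<alpha> \<le> X + sqrt (\<alpha>^2 + 4 * b^2 * (1 + c)^2)" using X2 Y by simp
    also have "\<dots> \<le> sqrt 2 * (X + sqrt (\<alpha>^2 + 4 * b^2 * (1 + c)^2))"
    proof -
      have Z0: "0 \<le> X + sqrt (\<alpha>^2 + 4 * b^2 * (1 + c)^2)" using X2 Y apos by linarith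
      show ?thesis using mult_right_mono[OF s2 Z0] by simp
    qed
    finally show ?thesis by (simp add: D_def X_def)
  qed
  have "\<epsilon> \<le> \<alpha>^2 / D" using epsb by (simp add: \<alpha>_def D_def b_def c_def)
  also have "\<dots> \<le> \<alpha>^2 / (4 * \<alpha>)" using D4 apos by (intro divide_left_mono) auto
  also have "\<dots> = \<alpha> / 4" using apos by (simp add: power2_eq_square)
  finally have e4: "\<epsilon> \<le> \<alpha> / 4" .
  have sdecf: "\<And>i j. i \<le> j \<Longrightarrow> s j \<le> s i" using sdec by blast
  have w1: "s j \<le> \<sigma> j + dD" for j unfolding dD_def
    by (rule weyl_half[OF oU oV oP oQ Bv Mq[rule_format] _ _ \<sigma>dec sdecf])
       (use spos s0 in \<open>auto simp: less_imp_le\<close>)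
  have w2: "\<sigma> j \<le> s j + dD" for j
  proof -
    have "\<sigma> j \<le> s j + fro_norm (- \<Delta>)"
      by (rule weyl_half[OF oP oQ oU oV Mq[rule_format] Bv _ _ sdecf \<sigma>dec, where E = "- \<Delta>"])
         (use spos s0 in \<open>auto simp: less_imp_le\<close>)
    then show ?thesis by (simp add: fro_uminus dD_def)
  qed
  define g where "g = 3 * \<alpha> / 4"
  have gpos: "0 < g" using apos by (simp add: g_def)
  have ggap: "i \<noteq> j \<Longrightarrow> g \<le> \<bar>s j - \<sigma> i\<bar>" for i j
  proof -
    assume "i \<noteq> j"
    then have "\<alpha> \<le> \<bar>\<sigma> j - \<sigma> i\<bar>" using gap_le by simp
    moreover have "dD < \<alpha> / 4" using dlt e4 by (simp add: dD_def)
    ultimately show ?thesis using w1[of j] w2[of j] unfolding g_def by arith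
  qed
  define Xc where "Xc i j = column i U \<bullet> column j P" for i j
  define Yc where "Yc i j = column i V \<bullet> column j Q" for i j
  define ac where "ac i j = column i U \<bullet> (\<Delta> *v column j Q)" for i j
  define bc where "bc i j = column i V \<bullet> (transpose \<Delta> *v column j P)" for i j
  have eq1: "s j * Xc i j - \<sigma> i * Yc i j = ac i j" for i j
  proof -
    have "s j * Xc i j = column i U \<bullet> ((B + \<Delta>) *v column j Q)" by (simp add: Xc_def Mq)
    also have "\<dots> = column i U \<bullet> (B *v column j Q) + ac i j"
      by (simp add: ac_def matrix_vector_mult_add_rdistrib inner_add_right)
    also have "column i U \<bullet> (B *v column j Q) = column j Q \<bullet> (transpose B *v column i U)"
      by (subst inner_commute) (rule inner_adj)
    also have "\<dots> = \<sigma> i * Yc i j" by (simp add: Bu Yc_def inner_commute)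
    finally show ?thesis by simp
  qed
  have eq2: "s j * Yc i j - \<sigma> i * Xc i j = bc i j" for i j
  proof -
    have "s j * Yc i j = column i V \<bullet> (transpose (B + \<Delta>) *v column j P)" by (simp add: Yc_def Mp)
    also have "\<dots> = column i V \<bullet> (transpose B *v column j P) + bc i j"
      by (simp add: bc_def transpose_add_mv inner_add_right)
    also have "column i V \<bullet> (transpose B *v column j P) = column j P \<bullet> (B *v column i V)"
      using inner_adj[of "transpose B" "column j P" "column i V"] by (simp add: inner_commute)
    also have "\<dots> = \<sigma> i * Xc i j" by (simp add: Bv Xc_def inner_commute)
    finally show ?thesis by simp
  qed
  have ke: "i \<noteq> j \<Longrightarrow> g^2 * (Xc i j)^2 \<le> (ac i j)^2 + (bc i j)^2" for i j
    by (rule key_alg[OF _ _ gpos ggap eq1 eq2]) (use s0 spos in \<open>auto simp: less_imp_le\<close>)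
  have SA: "(\<Sum>j\<in>UNIV. \<Sum>i\<in>UNIV. (ac i j)^2) = dD^2"
  proof -
    have "(\<Sum>j\<in>UNIV. \<Sum>i\<in>UNIV. (ac i j)^2) = (\<Sum>j\<in>UNIV. (\<Delta> *v column j Q) \<bullet> (\<Delta> *v column j Q))"
      unfolding ac_def by (simp add: parseval[OF oU])
    also have "\<dots> = dD^2" unfolding dD_def by (rule fro_cols[OF oQ, symmetric])
    finally show ?thesis .
  qed
  have SB: "(\<Sum>j\<in>UNIV. \<Sum>i\<in>UNIV. (bc i j)^2) = dD^2"
  proof -
    have "(\<Sum>j\<in>UNIV. \<Sum>i\<in>UNIV. (bc i j)^2) = (\<Sum>j\<in>UNIV. (transpose \<Delta> *v column j P) \<bullet> (transpose \<Delta> *v column j P))"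
      unfolding bc_def by (simp add: parseval[OF oV])
    also have "\<dots> = (fro_norm (transpose \<Delta>))^2" by (rule fro_cols[OF oP, symmetric])
    finally show ?thesis by (simp add: fro_transpose dD_def)
  qed
  have col1: "(\<Sum>i\<in>UNIV. (Xc i j)^2) = 1" for j
    unfolding Xc_def using parseval[OF oU, of "column j P"] orthon_of_orth[OF oP, of j j] by simp
  define Off where "Off j = (\<Sum>i\<in>UNIV - {j}. (Xc i j)^2)" for j
  have offeq: "1 - (Xc j j)^2 = Off j" for j
    using col1[of j] sum.remove[of UNIV j "\<lambda>i. (Xc i j)^2"] by (simp add: Off_def)
  have offb: "g^2 * Off j \<le> (\<Sum>i\<in>UNIV. (ac i j)^2 + (bc i j)^2)" for j
  proof -
    have "g^2 * Off j = (\<Sum>i\<in>UNIV - {j}. g^2 * (Xc i j)^2)" by (simp add: Off_def sum_distrib_left)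
    also have "\<dots> \<le> (\<Sum>i\<in>UNIV - {j}. (ac i j)^2 + (bc i j)^2)" by (rule sum_mono) (use ke in auto)
    also have "\<dots> \<le> (\<Sum>i\<in>UNIV. (ac i j)^2 + (bc i j)^2)" by (rule sum_mono2) auto
    finally show ?thesis .
  qed
  have colj: "column j (U - P) \<bullet> column j (U - P) \<le> 2 * (1 - (Xc j j)^2)" for j
  proof -
    have pp: "column j P \<bullet> column j P = 1" using orthon_of_orth[OF oP, of j j] by simp
    have "column j (U - P) \<bullet> column j (U - P) = 2 - 2 * Xc j j"
      by (simp add: column_diff inner_diff_left inner_diff_right uu pp Xc_def inner_commute)
    moreover have x0: "0 \<le> Xc j j" using sg by (simp add: Xc_def)
    moreover have "0 \<le> Off j" unfolding Off_def by (rule sum_nonneg) simp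
    then have "(Xc j j)^2 \<le> 1" using offeq[of j] by linarith
    then have "Xc j j \<le> 1" using x0 by (simp add: power_le_one_iff)
    then have "(Xc j j)^2 \<le> Xc j j" using x0 by (simp add: power2_eq_square mult_left_le_one_le)
    ultimately show ?thesis by simp
  qed
  define F where "F = (fro_norm (U - P))^2"
  have "g^2 * F = (\<Sum>j\<in>UNIV. g^2 * (column j (U - P) \<bullet> column j (U - P)))"
    by (simp add: F_def fro_cols_direct sum_distrib_left)
  also have "\<dots> \<le> (\<Sum>j\<in>UNIV. 2 * (g^2 * Off j))"
  proof (rule sum_mono)
    fix j
    have "g^2 * (column j (U - P) \<bullet> column j (U - P)) \<le> g^2 * (2 * (1 - (Xc j j)^2))"
      by (rule mult_left_mono[OF colj]) simp
    then show "g^2 * (column j (U - P) \<bullet> column j (U - P)) \<le> 2 * (g^2 * Off j)"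
      by (simp add: offeq)
  qed
  also have "\<dots> \<le> (\<Sum>j\<in>UNIV. 2 * (\<Sum>i\<in>UNIV. (ac i j)^2 + (bc i j)^2))"
    by (rule sum_mono) (use offb in simp)
  also have "\<dots> = 2 * ((\<Sum>j\<in>UNIV. \<Sum>i\<in>UNIV. (ac i j)^2) + (\<Sum>j\<in>UNIV. \<Sum>i\<in>UNIV. (bc i j)^2))"
    by (simp add: sum_distrib_left sum.distrib)
  also have "\<dots> = 4 * dD^2" using SA SB by simp
  finally have gF: "g^2 * F \<le> 4 * dD^2" .
  have "dD^2 \<le> \<epsilon>^2" using dlt by (intro power_mono) (auto simp: dD_def fro_nonneg)
  then have "(9/16) * (\<alpha>^2 * F) \<le> 4 * \<epsilon>^2" using gF by (simp add: g_def power_divide power_mult_distrib)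
  then have "\<alpha>^2 * F \<le> 8 * \<epsilon>^2"
  proof -
    assume h: "(9/16) * (\<alpha>^2 * F) \<le> 4 * \<epsilon>^2"
    have "0 \<le> \<epsilon>^2" by simp
    then show ?thesis using h by linarith
  qed
  then have "F \<le> 8 * \<epsilon>^2 / \<alpha>^2" using apos by (simp add: pos_le_divide_eq mult.commute)
  also have "8 * \<epsilon>^2 / \<alpha>^2 = (2 * sqrt 2 * \<epsilon> / \<alpha>)^2"
    by (simp add: power_divide power_mult_distrib)
  finally have "(fro_norm (U - P))^2 \<le> (2 * sqrt 2 * \<epsilon> / \<alpha>)^2" by (simp add: F_def)
  then have fin: "fro_norm (U - P) \<le> 2 * sqrt 2 * \<epsilon> / \<alpha>"
    by (rule power2_le_imp_le) (use eps0 apos in simp)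
  show ?thesis using svdM wd fin unfolding \<alpha>_def by blast
qed


end
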